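(* Consider any correct node-based data structure for the 2D $(+,\min)$ update-query problem over an $N\times M$ matrix, as described in the context, in which $S_U,S_C,S_Q$ are fixed functions of the submatrix. Then some update or some query must visit at least $\frac{NM}{N+M}$ nodes; more precisely, there is a submatrix $B$ such that $|S_U(B)|+|S_C(B)|\ge\frac{NM}{N+M}$ or $|S_Q(B)|\ge\frac{NM}{N+M}$.
   Context: Coordinates $G=\{0,\dots,N-1\}\times\{0,\dots,M-1\}$; a submatrix $[x_0,x_1][y_0,y_1]$ is the set of $(x,y)$ with $x_0\le x\le x_1$, $y_0\le y\le y_1$. The 2D $(+,\min)$ update-query problem: after initialization with a real matrix $A$, an update $U(B,v)$ adds $v$ to every $A[x][y]$ with $(x,y)\in B$, and a query $Q(B)$ must return $\min_{(x,y)\in B}A[x][y]$ of the current matrix. A node-based data structure uses a family $\mathcal{N}$ of pairwise distinct nonempty subsets of $G$ (nodes) containing every singleton $\{(x,y)\}$. Each node $n$ stores a value $n_V$ and a lazy value $n_Z$; at initialization $n_V=\min_{(x,y)\in n}A[x][y]$ and $n_Z=0$. The structure is specified by fixed functions assigning to each submatrix $B$ sets $S_U(B),S_C(B),S_Q(B)\subseteq\mathcal{N}$ with $\bigcup_{n\in S_U(B)}n=B$ and $\bigcup_{n\in S_Q(B)}n=B$. The update $U(B,v)$ sets $n_Z\gets n_Z+v$ for every $n\in S_U(B)$ and may change $m_V$ (in any way) for every $m\in S_C(B)$; no other stored values change; it visits the nodes of $S_U(B)$ and $S_C(B)$. The query $Q(B)$ returns $\min_{n\in S_Q(B)}\big(n_V+\sum_{m\in\mathcal{N},\,m\supseteq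 n}m_Z\big)$ and visits the nodes of $S_Q(B)$. The structure is correct if, for every initial matrix and every sequence of updates and queries, every query returns the correct answer. *)

theory Defs
  imports Complex_Main
begin

type_synonym cell = "nat \<times> nat"
type_synonym node = "cell set"
type_synonym matrix = "cell \<Rightarrow> real"

definition grid :: "nat \<Rightarrow> nat \<Rightarrow> cell set" where
  "grid N M = {0..<N} \<times> {0..<M}"

definition submatrix :: "nat \<Rightarrow> nat \<Rightarrow> nat \<Rightarrow> nat \<Rightarrow> cell set" where
  "submatrix x0 x1 y0 y1 = {x0..x1} \<times> {y0..y1}"

definition submatrices :: "nat \<Rightarrow> nat \<Rightarrow> cell set set" where
  "submatrices N M = {submatrix x0 x1 y0 y1 | x0 x1 y0 y1.
      x0 \<le> x1 \<and> x1 < N \<and> y0 \<le> y1 \<and> y1 < M}"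

text \<open>A node-based data structure: the node family, the fixed functions S_U, S_C, S_Q
  (indexed by the submatrix, as a set of cells), and the (arbitrary, deterministic) rule
  by which an update U(B,v) sets the values m_V of the nodes m in S_C(B).\<close>
record ds =
  nodes :: "node set"
  SU :: "cell set \<Rightarrow> node set"
  SC :: "cell set \<Rightarrow> node set"
  SQ :: "cell set \<Rightarrow> node set"
  chg :: "matrix \<Rightarrow> (node \<Rightarrow> real) \<Rightarrow> (node \<Rightarrow> real) \<Rightarrow> cell set \<Rightarrow> real \<Rightarrow> node \<Rightarrow> real"

definition node_based_ds :: "nat \<Rightarrow> nat \<Rightarrow> ds \<Rightarrow> bool" where
  "node_based_ds N M D \<longleftrightarrow>
     (\<forall>n\<in>nodes D. n \<noteq> {} \<and> n \<subseteq> grid N M) \<and>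
     (\<forall>p\<in>grid N M. {p} \<in> nodes D) \<and>
     (\<forall>B\<in>submatrices N M.
        SU D B \<subseteq> nodes D \<and> SC D B \<subseteq> nodes D \<and> SQ D B \<subseteq> nodes D \<and>
        \<Union>(SU D B) = B \<and> \<Union>(SQ D B) = B)"

datatype operation = Upd "cell set" real | Qry "cell set"

fun op_set :: "operation \<Rightarrow> cell set" where
  "op_set (Upd B v) = B"
| "op_set (Qry B) = B"

text \<open>State: (current matrix A, stored values V, lazy values Z).\<close>
type_synonym state = "matrix \<times> (node \<Rightarrow> real) \<times> (node \<Rightarrow> real)"

definition init_state :: "matrix \<Rightarrow> state" where
  "init_state A = (A, (\<lambda>n. Min (A ` n)), (\<lambda>n. 0))"

definition upd_step :: "ds \<Rightarrow> state \<Rightarrow> cell set \<Rightarrow> real \<Rightarrow> state" where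
  "upd_step D s B v = (case s of (A, V, Z) \<Rightarrow>
     ((\<lambda>p. if p \<in> B then A p + v else A p),
      (\<lambda>m. if m \<in> SC D B then chg D A V Z B v m else V m),
      (\<lambda>n. if n \<in> SU D B then Z n + v else Z n)))"

definition query_val :: "ds \<Rightarrow> state \<Rightarrow> cell set \<Rightarrow> real" where
  "query_val D s B = (case s of (A, V, Z) \<Rightarrow>
     Min ((\<lambda>n. V n + (\<Sum>m\<in>{m\<in>nodes D. n \<subseteq> m}. Z m)) ` SQ D B))"

fun all_correct :: "ds \<Rightarrow> state \<Rightarrow> operation list \<Rightarrow> bool" where
  "all_correct D s [] = True"
| "all_correct D s (Qry B # ops) =
     (query_val D s B = Min (fst s ` B) \<and> all_correct D s ops)"
| "all_correct D s (Upd B v # ops) = all_correct D (upd_step D s B v) ops"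

definition correct_ds :: "nat \<Rightarrow> nat \<Rightarrow> ds \<Rightarrow> bool" where
  "correct_ds N M D \<longleftrightarrow>
     (\<forall>A ops. (\<forall>op\<in>set ops. op_set op \<in> submatrices N M) \<longrightarrow>
        all_correct D (init_state A) ops)"

end

theory Submission
  imports Defs
begin

lemma sub_in:
  assumes "x0 \<le> x1" "x1 < N" "y0 \<le> y1" "y1 < M"
  shows "submatrix x0 x1 y0 y1 \<in> submatrices N M"
  using assms unfolding submatrices_def by blast

lemma key:
  assumes nb: "node_based_ds N M D" and cor: "correct_ds N M D"
    and rc: "r < N" "c < M"
    and notin: "{(r,c)} \<notin> SQ D (submatrix 0 (N-1) c c)"
    and disj: "SQ D (submatrix 0 (N-1) c c) \<inter> SC D (submatrix r r 0 (M-1)) = {}"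
  shows False
proof -
  let ?R = "submatrix r r 0 (M-1)"
  let ?C = "submatrix 0 (N-1) c c"
  have Rs: "?R \<in> submatrices N M" using rc by (intro sub_in) auto
  have Cs: "?C \<in> submatrices N M" using rc by (intro sub_in) auto
  have nb1: "\<forall>n\<in>nodes D. n \<noteq> {} \<and> n \<subseteq> grid N M"
    and nb3: "\<forall>B\<in>submatrices N M. SU D B \<subseteq> nodes D \<and> SC D B \<subseteq> nodes D \<and> SQ D B \<subseteq> nodes D \<and>
        \<Union>(SU D B) = B \<and> \<Union>(SQ D B) = B"
    using nb unfolding node_based_ds_def by simp_all
  have SQsub: "SQ D ?C \<subseteq> nodes D" and SQun: "\<Union>(SQ D ?C) = ?C"
    using bspec[OF nb3 Cs] by simp_all
  have SUun: "\<Union>(SU D ?R) = ?R"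
    using bspec[OF nb3 Rs] by simp_all
  have nonempty: "\<And>n. n \<in> nodes D \<Longrightarrow> n \<noteq> {}" using nb1 by simp
  define A :: matrix where "A = (\<lambda>_. 0)"
  define s where "s = upd_step D (init_state A) ?R (-1)"
  have ops: "\<forall>op\<in>set [Upd ?R (-1), Qry ?C]. op_set op \<in> submatrices N M" using Rs Cs by simp
  have "all_correct D (init_state A) [Upd ?R (-1), Qry ?C]"
    using cor ops unfolding correct_ds_def by blast
  hence eq: "query_val D s ?C = Min (fst s ` ?C)" unfolding s_def by simp
  have rcC: "(r,c) \<in> ?C" and rcR: "(r,c) \<in> ?R" using rc unfolding submatrix_def by auto
  have "fst s (r,c) = -1" using rcR unfolding s_def upd_step_def init_state_def A_def by simp
  moreover have "finite ?C" unfolding submatrix_def by simp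
  ultimately have rhs: "Min (fst s ` ?C) \<le> -1" using rcC by (metis Min_le finite_imageI image_eqI)
  obtain A' V' Z' where sdef: "s = (A', V', Z')" by (cases s) auto
  have V': "\<And>m. m \<notin> SC D ?R \<Longrightarrow> V' m = Min (A ` m)"
    using sdef unfolding s_def upd_step_def init_state_def by auto
  have Z': "\<And>m. m \<notin> SU D ?R \<Longrightarrow> Z' m = 0"
    using sdef unfolding s_def upd_step_def init_state_def by auto
  have each: "V' n + (\<Sum>m\<in>{m\<in>nodes D. n \<subseteq> m}. Z' m) = 0" if n: "n \<in> SQ D ?C" for n
  proof -
    have nn: "n \<in> nodes D" "n \<noteq> {}" using n SQsub nonempty by auto
    have nC: "n \<subseteq> ?C" using n SQun by blast
    have "n \<notin> SC D ?R" using n disj by blast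
    hence v: "V' n = 0" using V' nn unfolding A_def by (simp add: image_constant_conv)
    have "Z' m = 0" if m: "m \<in> {m\<in>nodes D. n \<subseteq> m}" for m
    proof (rule Z', rule notI)
      assume "m \<in> SU D ?R"
      hence "m \<subseteq> ?R" using SUun by blast
      hence "n \<subseteq> ?R \<inter> ?C" using m nC by auto
      also have "?R \<inter> ?C = {(r,c)}" unfolding submatrix_def using rc by auto
      finally have "n = {(r,c)}" using nn by blast
      thus False using n notin by simp
    qed
    thus ?thesis using v by simp
  qed
  have ne: "SQ D ?C \<noteq> {}" using SQun rcC by auto
  have "(\<lambda>n. V' n + (\<Sum>m\<in>{m\<in>nodes D. n \<subseteq> m}. Z' m)) ` SQ D ?C = {0}"
    using each ne by auto
  hence "query_val D s ?C = 0" unfolding query_val_def sdef by simp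
  thus False using eq rhs by simp
qed

theorem theorem5:
  fixes N M :: nat and D :: ds
  assumes "N \<ge> 1" and "M \<ge> 1"
    and "node_based_ds N M D"
    and "correct_ds N M D"
  shows "\<exists>B\<in>submatrices N M.
           real (card (SU D B)) + real (card (SC D B)) \<ge> real N * real M / (real N + real M)
         \<or> real (card (SQ D B)) \<ge> real N * real M / (real N + real M)"
proof (rule ccontr)
  assume neg: "\<not> ?thesis"
  define k where "k = real N * real M / (real N + real M)"
  define R where "R r = submatrix r r 0 (M-1)" for r
  define C where "C c = submatrix 0 (N-1) c c" for c
  define P where "P r c \<longleftrightarrow> {(r,c)} \<notin> SQ D (C c)" for r c
  have nbf: "\<forall>B\<in>submatrices N M. SU D B \<subseteq> nodes D \<and> SC D B \<subseteq> nodes D \<and> SQ D B \<subseteq> nodes D \<and>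
        \<Union>(SU D B) = B \<and> \<Union>(SQ D B) = B"
    and nb1: "\<forall>n\<in>nodes D. n \<noteq> {} \<and> n \<subseteq> grid N M"
    using assms(3)[unfolded node_based_ds_def] by (fact conjunct2[OF conjunct2], fact conjunct1)
  have fin: "finite (nodes D)"
  proof -
    have "nodes D \<subseteq> Pow (grid N M)" using nb1 by auto
    moreover have "finite (grid N M)" unfolding grid_def by simp
    ultimately show ?thesis by (meson finite_Pow_iff finite_subset)
  qed
  have Rs: "R r \<in> submatrices N M" if "r < N" for r using that assms unfolding R_def by (intro sub_in) auto
  have Cs: "C c \<in> submatrices N M" if "c < M" for c using that assms unfolding C_def by (intro sub_in) auto
  have negB: "real (card (SU D B)) + real (card (SC D B)) < k \<and> real (card (SQ D B)) < k"
    if "B \<in> submatrices N M" for B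
  proof -
    have "\<not> (real (card (SU D B)) + real (card (SC D B)) \<ge> k \<or> real (card (SQ D B)) \<ge> k)"
      using neg that unfolding k_def by blast
    thus ?thesis by linarith
  qed
  have SCk: "real (card (SC D (R r))) < k" if "r < N" for r
    using negB[OF Rs[OF that]] by linarith
  have SQk: "real (card (SQ D (C c))) < k" if "c < M" for c
    using negB[OF Cs[OF that]] by linarith
  have h1: "card {c\<in>{..<M}. P r c} \<le> card (SC D (R r))" if r: "r < N" for r
  proof -
    have ex: "\<exists>n. n \<in> SQ D (C c) \<inter> SC D (R r)" if c: "c \<in> {c\<in>{..<M}. P r c}" for c
    proof (rule ccontr)
      assume "\<not> ?thesis"
      hence "SQ D (C c) \<inter> SC D (R r) = {}" by blast
      moreover have "c < M" "{(r,c)} \<notin> SQ D (C c)" using c unfolding P_def by auto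
      moreover have "c < M \<Longrightarrow> {(r,c)} \<notin> SQ D (C c) \<Longrightarrow> SQ D (C c) \<inter> SC D (R r) = {} \<Longrightarrow> False"
        unfolding C_def R_def by (rule key[OF assms(3) assms(4) r])
      ultimately show False by blast
    qed
    define f where "f c = (SOME n. n \<in> SQ D (C c) \<inter> SC D (R r))" for c
    have fin_in: "f c \<in> SQ D (C c) \<inter> SC D (R r)" if "c \<in> {c\<in>{..<M}. P r c}" for c
      unfolding f_def using someI_ex[OF ex[OF that]] .
    have un: "\<Union>(SQ D (C c)) = C c" if "c < M" for c
      using bspec[OF nbf Cs[OF that]] by simp
    have inj: "inj_on f {c\<in>{..<M}. P r c}"
    proof (rule inj_onI)
      fix a b assume a: "a \<in> {c\<in>{..<M}. P r c}" and b: "b \<in> {c\<in>{..<M}. P r c}" and e: "f a = f b"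
      have fa: "f a \<in> SQ D (C a)" "f b \<in> SQ D (C b)" using fin_in[OF a] fin_in[OF b] by auto
      have "a < M" using a by simp
      hence "SQ D (C a) \<subseteq> nodes D" using bspec[OF nbf Cs] by simp
      hence "f a \<in> nodes D" using fa(1) by blast
      hence "f a \<noteq> {}" using nb1 by auto
      then obtain p where p: "p \<in> f a" by auto
      have "p \<in> C a" using un[of a] a fa(1) p by auto
      moreover have "p \<in> C b" using un[of b] b fa(2) p e by auto
      ultimately show "a = b" unfolding C_def submatrix_def by auto
    qed
    have "f ` {c\<in>{..<M}. P r c} \<subseteq> SC D (R r)" using fin_in by auto
    moreover have "SC D (R r) \<subseteq> nodes D" using bspec[OF nbf Rs[OF r]] by simp
    hence "finite (SC D (R r))" using fin finite_subset by blast
    ultimately show ?thesis using card_inj_on_le[OF inj] by blast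
  qed
  have h2: "N - card (SQ D (C c)) \<le> card {r\<in>{..<N}. P r c}" if c: "c < M" for c
  proof -
    have "SQ D (C c) \<subseteq> nodes D" using bspec[OF nbf Cs[OF c]] by simp
    hence fq: "finite (SQ D (C c))" using fin finite_subset by blast
    have "card {r\<in>{..<N}. \<not> P r c} \<le> card (SQ D (C c))"
    proof (rule card_inj_on_le[where f="\<lambda>r. {(r,c)}"])
      show "inj_on (\<lambda>r. {(r,c)}) {r\<in>{..<N}. \<not> P r c}" by (auto intro: inj_onI)
      show "(\<lambda>r. {(r,c)}) ` {r\<in>{..<N}. \<not> P r c} \<subseteq> SQ D (C c)" unfolding P_def by auto
    qed (fact fq)
    moreover have "card {r\<in>{..<N}. P r c} + card {r\<in>{..<N}. \<not> P r c} = N"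
    proof -
      have e: "{..<N} = {r\<in>{..<N}. P r c} \<union> {r\<in>{..<N}. \<not> P r c}" by blast
      have "card ({r\<in>{..<N}. P r c} \<union> {r\<in>{..<N}. \<not> P r c}) = card {r\<in>{..<N}. P r c} + card {r\<in>{..<N}. \<not> P r c}"
        by (rule card_Un_disjoint) auto
      thus ?thesis using e by (metis card_lessThan)
    qed
    ultimately show ?thesis by linarith
  qed
  have cnt: "card {x\<in>A. Q x} = (\<Sum>x\<in>A. if Q x then 1 else 0::nat)" if "finite A" for A :: "nat set" and Q
    by (subst sum.inter_filter[OF that, symmetric]) simp
  have swap: "(\<Sum>r<N. card {c\<in>{..<M}. P r c}) = (\<Sum>c<M. card {r\<in>{..<N}. P r c})"
    by (simp only: cnt[OF finite_lessThan]) (rule sum.swap)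
  have s1: "(\<Sum>r<N. real (card (SC D (R r)))) < real N * k"
  proof -
    have "(\<Sum>r<N. real (card (SC D (R r)))) < (\<Sum>r<N. k)"
      using SCk by (intro sum_strict_mono[OF finite_lessThan]) (use assms(1) in \<open>auto simp: lessThan_empty_iff\<close>)
    thus ?thesis by simp
  qed
  have s2: "real M * (real N - k) < (\<Sum>c<M. real N - real (card (SQ D (C c))))"
  proof -
    have "(\<Sum>c<M. real N - k) < (\<Sum>c<M. real N - real (card (SQ D (C c))))"
      using SQk by (intro sum_strict_mono[OF finite_lessThan]) (use assms(2) in \<open>auto simp: lessThan_empty_iff\<close>)
    thus ?thesis by simp
  qed
  have s3: "(\<Sum>c<M. real N - real (card (SQ D (C c)))) \<le> (\<Sum>c<M. real (card {r\<in>{..<N}. P r c}))"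
  proof (rule sum_mono)
    fix c assume "c \<in> {..<M}"
    hence "N - card (SQ D (C c)) \<le> card {r\<in>{..<N}. P r c}" using h2 by auto
    thus "real N - real (card (SQ D (C c))) \<le> real (card {r\<in>{..<N}. P r c})" by linarith
  qed
  have s4: "(\<Sum>c<M. real (card {r\<in>{..<N}. P r c})) \<le> (\<Sum>r<N. real (card (SC D (R r))))"
  proof -
    have "(\<Sum>c<M. real (card {r\<in>{..<N}. P r c})) = (\<Sum>r<N. real (card {c\<in>{..<M}. P r c}))"
      by (simp only: of_nat_sum[symmetric] swap)
    also have "\<dots> \<le> (\<Sum>r<N. real (card (SC D (R r))))"
      using h1 by (intro sum_mono) auto
    finally show ?thesis .
  qed
  have "real M * (real N - k) < real N * k" using s1 s2 s3 s4 by linarith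
  hence "real N * real M < k * (real N + real M)" by (simp add: algebra_simps)
  moreover have "k * (real N + real M) = real N * real M" unfolding k_def using assms(1,2) by simp
  ultimately show False by simp
qed


end
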